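(* Let $\lambda\in(0,1)$ and let $n$ be a positive integer. If $G$ is a graph that maximizes $Mc^{e}_{\lambda}(G)$ among all finite simple connected graphs with $n$ vertices, then $G$ is a tree.
   Context: $d(u,v)$ denotes graph distance and $[u]$ the set of neighbours of $u$. For vertices $k,l$, $s^{kl}$ is the number of shortest $k$–$l$ paths and, for an edge $uv$, $s^{kl}_{uv}$ is the number of those passing through the edge $uv$. The exponential edge betweenness of an edge $uv$ is $b^{e}_{\lambda}(uv)=\sum_{\{k,l\}}\frac{s^{kl}_{uv}}{s^{kl}}\lambda^{d(k,l)}$ over all unordered pairs $\{k,l\}$ of distinct vertices; the exponential betweenness centrality of a vertex $u$ is $c^{e}_{\lambda}(u)=\sum_{v\in[u]}b^{e}_{\lambda}(uv)$; and $Mc^{e}_{\lambda}(G)=\max\{c^{e}_{\lambda}(u):u\in V(G)\}$. *)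

theory Defs
  imports Complex_Main
begin

definition simple_graph :: "'a set \<Rightarrow> ('a \<Rightarrow> 'a \<Rightarrow> bool) \<Rightarrow> bool" where
  "simple_graph V E \<longleftrightarrow> finite V \<and> (\<forall>u v. E u v \<longrightarrow> u \<in> V \<and> v \<in> V)
     \<and> (\<forall>u v. E u v \<longrightarrow> E v u) \<and> (\<forall>u. \<not> E u u)"

text \<open>A walk is a nonempty vertex list with consecutive vertices adjacent;
  its length (number of edges) is length p - 1.\<close>

definition walk :: "'a set \<Rightarrow> ('a \<Rightarrow> 'a \<Rightarrow> bool) \<Rightarrow> 'a list \<Rightarrow> bool" where
  "walk V E p \<longleftrightarrow> p \<noteq> [] \<and> set p \<subseteq> V \<and>
     (\<forall>i. Suc i < length p \<longrightarrow> E (p ! i) (p ! Suc i))"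

definition connected_graph :: "'a set \<Rightarrow> ('a \<Rightarrow> 'a \<Rightarrow> bool) \<Rightarrow> bool" where
  "connected_graph V E \<longleftrightarrow>
     (\<forall>k\<in>V. \<forall>l\<in>V. \<exists>p. walk V E p \<and> hd p = k \<and> last p = l)"

definition gdist :: "'a set \<Rightarrow> ('a \<Rightarrow> 'a \<Rightarrow> bool) \<Rightarrow> 'a \<Rightarrow> 'a \<Rightarrow> nat" where
  "gdist V E k l = (LEAST m. \<exists>p. walk V E p \<and> hd p = k \<and> last p = l \<and> length p = Suc m)"

definition shortest_paths :: "'a set \<Rightarrow> ('a \<Rightarrow> 'a \<Rightarrow> bool) \<Rightarrow> 'a \<Rightarrow> 'a \<Rightarrow> 'a list set" where
  "shortest_paths V E k l =
     {p. walk V E p \<and> hd p = k \<and> last p = l \<and> length p = Suc (gdist V E k l)}"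

definition uses_edge :: "'a list \<Rightarrow> 'a \<Rightarrow> 'a \<Rightarrow> bool" where
  "uses_edge p u v \<longleftrightarrow> (\<exists>i. Suc i < length p \<and> {p ! i, p ! Suc i} = {u, v})"

definition num_sp :: "'a set \<Rightarrow> ('a \<Rightarrow> 'a \<Rightarrow> bool) \<Rightarrow> 'a \<Rightarrow> 'a \<Rightarrow> nat" where
  "num_sp V E k l = card (shortest_paths V E k l)"

definition num_sp_edge :: "'a set \<Rightarrow> ('a \<Rightarrow> 'a \<Rightarrow> bool) \<Rightarrow> 'a \<Rightarrow> 'a \<Rightarrow> 'a \<Rightarrow> 'a \<Rightarrow> nat" where
  "num_sp_edge V E k l u v = card {p \<in> shortest_paths V E k l. uses_edge p u v}"

text \<open>Exponential edge betweenness. The sum over unordered pairs {k,l} of distinct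
  vertices is written as half the sum over ordered pairs (the summand is symmetric in k,l).\<close>
definition exp_edge_betweenness ::
  "real \<Rightarrow> 'a set \<Rightarrow> ('a \<Rightarrow> 'a \<Rightarrow> bool) \<Rightarrow> 'a \<Rightarrow> 'a \<Rightarrow> real" where
  "exp_edge_betweenness lam V E u v =
     (1/2) * (\<Sum>(k,l) \<in> {(k,l). k \<in> V \<and> l \<in> V \<and> k \<noteq> l}.
        real (num_sp_edge V E k l u v) / real (num_sp V E k l) * lam ^ gdist V E k l)"

definition exp_betweenness_centrality ::
  "real \<Rightarrow> 'a set \<Rightarrow> ('a \<Rightarrow> 'a \<Rightarrow> bool) \<Rightarrow> 'a \<Rightarrow> real" where
  "exp_betweenness_centrality lam V E u =
     (\<Sum>v \<in> {v \<in> V. E u v}. exp_edge_betweenness lam V E u v)"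

definition max_exp_betweenness :: "real \<Rightarrow> 'a set \<Rightarrow> ('a \<Rightarrow> 'a \<Rightarrow> bool) \<Rightarrow> real" where
  "max_exp_betweenness lam V E = Max (exp_betweenness_centrality lam V E ` V)"

definition is_cycle :: "'a set \<Rightarrow> ('a \<Rightarrow> 'a \<Rightarrow> bool) \<Rightarrow> 'a list \<Rightarrow> bool" where
  "is_cycle V E p \<longleftrightarrow> walk V E p \<and> distinct p \<and> length p \<ge> 3 \<and> E (last p) (hd p)"

definition is_tree :: "'a set \<Rightarrow> ('a \<Rightarrow> 'a \<Rightarrow> bool) \<Rightarrow> bool" where
  "is_tree V E \<longleftrightarrow> connected_graph V E \<and> (\<nexists>p. is_cycle V E p)"

end

theory Submission imports Defs begin

lemma walk_shortcut:
  assumes w: "walk V E p" and ij: "i < j" "j < length p" and eq: "p ! i = p ! j"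
  shows "walk V E (take i p @ drop j p)"
proof -
  let ?q = "take i p @ drop j p"
  have lq: "length ?q = i + (length p - j)" using ij by simp
  have "?q \<noteq> []" using ij by simp
  moreover have "set ?q \<subseteq> V"
  proof -
    have "set ?q \<subseteq> set p" using set_take_subset[of i p] set_drop_subset[of j p] by auto
    then show ?thesis using w unfolding walk_def by auto
  qed
  moreover have "E (?q ! m) (?q ! Suc m)" if m: "Suc m < length ?q" for m
  proof -
    consider "Suc m < i" | "Suc m = i" | "i \<le> m" by linarith
    then show ?thesis
    proof cases
      case 1
      then show ?thesis using w ij unfolding walk_def by (simp add: nth_append)
    next
      case 2
      then have "?q ! m = p ! m" "?q ! Suc m = p ! j" using ij by (auto simp: nth_append)
      moreover have "E (p ! m) (p ! Suc m)" using w 2 ij unfolding walk_def by auto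
      ultimately show ?thesis using 2 eq by simp
    next
      case 3
      then have "?q ! m = p ! (j + (m - i))" "?q ! Suc m = p ! Suc (j + (m - i))"
        using ij m by (auto simp: nth_append Suc_diff_le)
      moreover have "Suc (j + (m - i)) < length p" using m lq 3 by linarith
      ultimately show ?thesis using w unfolding walk_def by auto
    qed
  qed
  ultimately show ?thesis unfolding walk_def by blast
qed

lemma gdist_le:
  assumes "walk V E p" "hd p = k" "last p = l"
  shows "gdist V E k l \<le> length p - 1"
  unfolding gdist_def
proof (rule Least_le)
  have "p \<noteq> []" using assms(1) unfolding walk_def by simp
  then have "length p = Suc (length p - 1)" by simp
  then show "\<exists>p'. walk V E p' \<and> hd p' = k \<and> last p' = l \<and> length p' = Suc (length p - 1)"
    using assms by blast
qed

lemma sp_distinct: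
  assumes p: "p \<in> shortest_paths V E k l"
  shows "distinct p"
proof (rule ccontr)
  assume nd: "\<not> distinct p"
  from p have w: "walk V E p" and h: "hd p = k" and la: "last p = l"
    and len: "length p = Suc (gdist V E k l)"
    unfolding shortest_paths_def by auto
  obtain i j where ij: "i < j" "j < length p" "p ! i = p ! j"
    using nd unfolding distinct_conv_nth by (metis linorder_neqE_nat)
  let ?q = "take i p @ drop j p"
  have wq: "walk V E ?q" using walk_shortcut[OF w ij] .
  have "hd ?q = k"
  proof (cases "i = 0")
    case True then show ?thesis using ij h w
      by (simp add: hd_drop_conv_nth hd_conv_nth walk_def)
  next
    case False then have "p \<noteq> []" using ij by auto
    then show ?thesis using ij h False by (simp add: hd_append hd_take)
  qed
  moreover have "last ?q = l" using ij la by simp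
  ultimately have "gdist V E k l \<le> length ?q - 1" using gdist_le[OF wq] by blast
  moreover have "length ?q = i + (length p - j)" using ij by simp
  ultimately show False using len ij by linarith
qed


lemma uses_edge_sub:
  assumes d: "distinct p" and i: "i < length p" and u: "u = p ! i"
  shows "{v \<in> N. E u v \<and> uses_edge p u v} \<subseteq>
     {v. (Suc i < length p \<and> v = p ! Suc i) \<or> (0 < i \<and> v = p ! (i - 1))}"
proof
  fix v assume "v \<in> {v \<in> N. E u v \<and> uses_edge p u v}"
  then have uv: "E u v" and "uses_edge p u v" by auto
  then obtain j where j: "Suc j < length p" "{p ! j, p ! Suc j} = {u, v}"
    unfolding uses_edge_def by blast
  then consider "p ! j = u \<and> p ! Suc j = v" | "p ! j = v \<and> p ! Suc j = u"
    by (metis doubleton_eq_iff)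
  then show "v \<in> {v. (Suc i < length p \<and> v = p ! Suc i) \<or> (0 < i \<and> v = p ! (i - 1))}"
  proof cases
    case 1
    then have "j = i" using d i j u by (metis Suc_lessD nth_eq_iff_index_eq)
    then show ?thesis using 1 j by auto
  next
    case 2
    then have "Suc j = i" using d i j u by (metis nth_eq_iff_index_eq)
    then show ?thesis using 2 j by auto
  qed
qed

lemma card_two_le: "card {v. P v \<or> Q v} \<le> 2" if "\<And>v. P v \<Longrightarrow> v = a" "\<And>v. Q v \<Longrightarrow> v = b" for P Q a b
proof -
  have "{v. P v \<or> Q v} \<subseteq> {a, b}" using that by auto
  then have "card {v. P v \<or> Q v} \<le> card {a, b}" by (rule card_mono[rotated]) simp
  also have "\<dots> \<le> 2" by (simp add: card_insert_if)
  finally show ?thesis .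
qed

lemma uses_edge_in: "uses_edge p u v \<Longrightarrow> u \<in> set p"
proof -
  assume "uses_edge p u v"
  then obtain i where i: "Suc i < length p" "{p ! i, p ! Suc i} = {u, v}" unfolding uses_edge_def by blast
  then have "u \<in> {p ! i, p ! Suc i}" by auto
  moreover have "p ! i \<in> set p" "p ! Suc i \<in> set p" using i(1) by auto
  ultimately show ?thesis by auto
qed

lemma path_count_0:
  assumes "u \<notin> set p"
  shows "card {v \<in> N. E u v \<and> uses_edge p u v} = 0"
proof -
  have "{v \<in> N. E u v \<and> uses_edge p u v} = {}"
    using assms by (auto dest: uses_edge_in)
  then show ?thesis by (simp only: card.empty)
qed

lemma path_count_le2:
  assumes d: "distinct p" and fin: "finite N"
  shows "card {v \<in> N. E u v \<and> uses_edge p u v} \<le> 2"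
proof (cases "u \<in> set p")
  case True
  then obtain i where i: "i < length p" "u = p ! i" by (metis in_set_conv_nth)
  have "card {v \<in> N. E u v \<and> uses_edge p u v} \<le> card {v. (Suc i < length p \<and> v = p ! Suc i) \<or> (0 < i \<and> v = p ! (i - 1))}"
    by (rule card_mono[OF _ uses_edge_sub[OF d i]]) simp
  also have "\<dots> \<le> 2" by (rule card_two_le) auto
  finally show ?thesis .
next
  case False
  then show ?thesis using path_count_0[of u p N E] by simp
qed

lemma path_count_end:
  assumes d: "distinct p" and fin: "finite N" and ne: "p \<noteq> []" and u: "u = hd p \<or> u = last p"
  shows "card {v \<in> N. E u v \<and> uses_edge p u v} \<le> 1"
proof -
  from u consider "u = p ! 0" | "u = p ! (length p - 1)"
    using ne by (metis hd_conv_nth last_conv_nth)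
  then show ?thesis
  proof cases
    case 1
    have "card {v \<in> N. E u v \<and> uses_edge p u v} \<le> card {v. (Suc 0 < length p \<and> v = p ! Suc 0) \<or> (0 < (0::nat) \<and> v = p ! (0 - 1))}"
      by (rule card_mono[OF _ uses_edge_sub[OF d _ 1]]) (use ne in auto)
    also have "{v. (Suc 0 < length p \<and> v = p ! Suc 0) \<or> (0 < (0::nat) \<and> v = p ! (0 - 1))} \<subseteq> {p ! Suc 0}" by auto
    then have "card {v. (Suc 0 < length p \<and> v = p ! Suc 0) \<or> (0 < (0::nat) \<and> v = p ! (0 - 1))} \<le> 1"
      using card_mono[of "{p ! Suc 0}"] by fastforce
    finally show ?thesis .
  next
    case 2
    let ?i = "length p - 1"
    have "card {v \<in> N. E u v \<and> uses_edge p u v} \<le> card {v. (Suc ?i < length p \<and> v = p ! Suc ?i) \<or> (0 < ?i \<and> v = p ! (?i - 1))}"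
      by (rule card_mono[OF _ uses_edge_sub[OF d _ 2]]) (use ne in auto)
    also have "{v. (Suc ?i < length p \<and> v = p ! Suc ?i) \<or> (0 < ?i \<and> v = p ! (?i - 1))} \<subseteq> {p ! (?i - 1)}" by auto
    then have "card {v. (Suc ?i < length p \<and> v = p ! Suc ?i) \<or> (0 < ?i \<and> v = p ! (?i - 1))} \<le> 1"
      using card_mono[of "{p ! (?i - 1)}"] by fastforce
    finally show ?thesis .
  qed
qed

lemma sp_finite:
  assumes "finite V"
  shows "finite (shortest_paths V E k l)"
proof -
  have "shortest_paths V E k l \<subseteq> {xs. set xs \<subseteq> V \<and> length xs = Suc (gdist V E k l)}"
    unfolding shortest_paths_def walk_def by auto
  moreover have "finite {xs. set xs \<subseteq> V \<and> length xs = Suc (gdist V E k l)}"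
    using finite_lists_length_eq[OF assms] .
  ultimately show ?thesis by (rule finite_subset)
qed

lemma double_count:
  assumes "finite N" "finite S"
  shows "(\<Sum>v\<in>N. card {p \<in> S. P p v}) = (\<Sum>p\<in>S. card {v \<in> N. P p v})"
proof -
  have "(\<Sum>v\<in>N. card {p \<in> S. P p v}) = (\<Sum>v\<in>N. \<Sum>p\<in>S. if P p v then 1 else 0)"
    using assms by (simp add: sum.inter_filter[symmetric])
  also have "\<dots> = (\<Sum>p\<in>S. \<Sum>v\<in>N. if P p v then 1 else 0)" by (rule sum.swap)
  also have "\<dots> = (\<Sum>p\<in>S. card {v \<in> N. P p v})"
    using assms by (simp add: sum.inter_filter[symmetric])
  finally show ?thesis .
qed


lemma walk_adj: "simple_graph V E \<Longrightarrow> E k l \<Longrightarrow> walk V E [k, l]"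
  unfolding simple_graph_def walk_def by (auto simp: less_Suc_eq)

lemma walk_single: "k \<in> V \<Longrightarrow> walk V E [k]"
  unfolding walk_def by auto

lemma sp_nonempty:
  assumes "walk V E p" "hd p = k" "last p = l"
  shows "\<exists>q. q \<in> shortest_paths V E k l"
proof -
  have ex: "\<exists>m. \<exists>p. walk V E p \<and> hd p = k \<and> last p = l \<and> length p = Suc m"
  proof -
    have "p \<noteq> []" using assms(1) unfolding walk_def by simp
    then have "length p = Suc (length p - 1)" by simp
    then show ?thesis using assms by blast
  qed
  have "\<exists>p. walk V E p \<and> hd p = k \<and> last p = l \<and> length p = Suc (gdist V E k l)"
    unfolding gdist_def by (rule LeastI_ex[OF ex])
  then show ?thesis unfolding shortest_paths_def by blast
qed

lemma gdist_ge2: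
  assumes "walk V E p" "hd p = k" "last p = l" "k \<noteq> l"
  shows "1 \<le> gdist V E k l" and "\<not> E k l \<Longrightarrow> 2 \<le> gdist V E k l"
proof -
  obtain q where q: "q \<in> shortest_paths V E k l" using sp_nonempty[OF assms(1-3)] by blast
  then have w: "walk V E q" "hd q = k" "last q = l" "length q = Suc (gdist V E k l)"
    unfolding shortest_paths_def by auto
  show "1 \<le> gdist V E k l"
  proof (rule ccontr)
    assume "\<not> 1 \<le> gdist V E k l"
    then have "length q = 1" using w by simp
    then obtain a where "q = [a]" by (metis One_nat_def length_0_conv length_Suc_conv)
    then show False using w assms(4) by simp
  qed
  assume ne: "\<not> E k l"
  show "2 \<le> gdist V E k l"
  proof (rule ccontr)
    assume "\<not> 2 \<le> gdist V E k l"
    with \<open>1 \<le> gdist V E k l\<close> have "length q = 2" using w by simp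
    then obtain a b where "q = [a, b]"
      by (metis One_nat_def Suc_1 length_0_conv length_Suc_conv)
    then show False using w ne unfolding walk_def by auto
  qed
qed

lemma sp_adj:
  assumes g: "simple_graph V E" and e: "E k l"
  shows "shortest_paths V E k l = {[k, l]}"
proof -
  have kl: "k \<noteq> l" using g e unfolding simple_graph_def by auto
  have w: "walk V E [k, l]" using walk_adj[OF g e] .
  have "gdist V E k l \<le> 1" using gdist_le[OF w] by simp
  moreover have "1 \<le> gdist V E k l" using gdist_ge2(1)[OF w _ _ kl] by simp
  ultimately have d: "gdist V E k l = 1" by simp
  show ?thesis
  proof
    show "shortest_paths V E k l \<subseteq> {[k, l]}"
    proof
      fix p assume "p \<in> shortest_paths V E k l"
      then have "hd p = k" "last p = l" "length p = 2" unfolding shortest_paths_def using d by auto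
      then show "p \<in> {[k, l]}"
        by (cases p; cases "tl p") (auto simp: length_Suc_conv)
    qed
    show "{[k, l]} \<subseteq> shortest_paths V E k l"
      unfolding shortest_paths_def using w d by simp
  qed
qed

definition Tf :: "real \<Rightarrow> 'a set \<Rightarrow> ('a \<Rightarrow> 'a \<Rightarrow> bool) \<Rightarrow> 'a \<Rightarrow> 'a \<Rightarrow> 'a \<Rightarrow> real" where
  "Tf lam V E u k l = real (\<Sum>v\<in>{v \<in> V. E u v}. num_sp_edge V E k l u v) / real (num_sp V E k l)
      * lam ^ gdist V E k l"

lemma cent_formula:
  "exp_betweenness_centrality lam V E u =
    1/2 * (\<Sum>(k,l)\<in>{(k,l). k \<in> V \<and> l \<in> V \<and> k \<noteq> l}. Tf lam V E u k l)"
proof -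
  let ?P = "{(k,l). k \<in> V \<and> l \<in> V \<and> k \<noteq> l}"
  have "exp_betweenness_centrality lam V E u =
     (\<Sum>v \<in> {v \<in> V. E u v}. 1/2 * (\<Sum>x\<in>?P.
        real (num_sp_edge V E (fst x) (snd x) u v) / real (num_sp V E (fst x) (snd x)) * lam ^ gdist V E (fst x) (snd x)))"
    unfolding exp_betweenness_centrality_def exp_edge_betweenness_def by (simp add: case_prod_beta)
  also have "\<dots> = 1/2 * (\<Sum>x\<in>?P. \<Sum>v \<in> {v \<in> V. E u v}.
        real (num_sp_edge V E (fst x) (snd x) u v) / real (num_sp V E (fst x) (snd x)) * lam ^ gdist V E (fst x) (snd x))"
    by (simp add: sum_distrib_left sum.swap[of _ "{v \<in> V. E u v}"])
  also have "\<dots> = 1/2 * (\<Sum>x\<in>?P. Tf lam V E u (fst x) (snd x))"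
    unfolding Tf_def by (simp add: sum_distrib_right sum_divide_distrib)
  finally show ?thesis by (simp add: case_prod_beta)
qed

lemma T_bound:
  assumes fin: "finite V" and lam: "0 \<le> lam"
    and c: "\<And>p. p \<in> shortest_paths V E k l \<Longrightarrow> card {v \<in> V. E u v \<and> uses_edge p u v} \<le> c"
  shows "Tf lam V E u k l \<le> lam ^ gdist V E k l * c"
proof -
  let ?S = "shortest_paths V E k l"
  have finS: "finite ?S" using sp_finite[OF fin] .
  have "(\<Sum>v\<in>{v \<in> V. E u v}. num_sp_edge V E k l u v) = (\<Sum>p\<in>?S. card {v \<in> {v \<in> V. E u v}. uses_edge p u v})"
    unfolding num_sp_edge_def by (rule double_count) (use fin finS in auto)
  also have "\<dots> \<le> (\<Sum>p\<in>?S. c)"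
  proof (rule sum_mono)
    fix p assume "p \<in> ?S"
    moreover have "{v \<in> {v \<in> V. E u v}. uses_edge p u v} = {v \<in> V. E u v \<and> uses_edge p u v}" by auto
    ultimately show "card {v \<in> {v \<in> V. E u v}. uses_edge p u v} \<le> c" using c by simp
  qed
  also have "\<dots> = num_sp V E k l * c" unfolding num_sp_def by simp
  finally have le: "real (\<Sum>v\<in>{v \<in> V. E u v}. num_sp_edge V E k l u v) \<le> real (num_sp V E k l) * real c"
    by (metis of_nat_le_iff of_nat_mult)
  show ?thesis
  proof (cases "num_sp V E k l = 0")
    case True then show ?thesis unfolding Tf_def using lam by simp
  next
    case False
    then have "real (\<Sum>v\<in>{v \<in> V. E u v}. num_sp_edge V E k l u v) / real (num_sp V E k l) \<le> real c"
      using le by (simp add: divide_le_eq mult.commute)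
    then show ?thesis unfolding Tf_def using lam
      by (metis mult.commute mult_left_mono zero_le_power)
  qed
qed


lemma cycle_edge_avoid:
  assumes c: "is_cycle V E p"
  shows "\<exists>a b. E a b \<and> a \<noteq> u \<and> b \<noteq> u"
proof -
  from c have w: "walk V E p" and d: "distinct p" and l3: "3 \<le> length p" and el: "E (last p) (hd p)"
    unfolding is_cycle_def by auto
  have e01: "E (p!0) (p!1)" and e12: "E (p!1) (p!2)" using w l3 unfolding walk_def
    by (auto simp: numeral_eq_Suc)
  have n01: "p!0 \<noteq> p!1" "p!1 \<noteq> p!2" "p!0 \<noteq> p!2"
  proof -
    have i: "0 < length p" "1 < length p" "2 < length p" using l3 by auto
    have "p!0 = p!1 \<longleftrightarrow> (0::nat) = 1" by (rule nth_eq_iff_index_eq[OF d i(1) i(2)])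
    moreover have "p!1 = p!2 \<longleftrightarrow> (1::nat) = 2" by (rule nth_eq_iff_index_eq[OF d i(2) i(3)])
    moreover have "p!0 = p!2 \<longleftrightarrow> (0::nat) = 2" by (rule nth_eq_iff_index_eq[OF d i(1) i(3)])
    ultimately show "p!0 \<noteq> p!1" "p!1 \<noteq> p!2" "p!0 \<noteq> p!2" by simp_all
  qed
  show ?thesis
  proof (cases "u = p!0 \<or> u = p!1")
    case False then show ?thesis using e01 by metis
  next
    case True
    then consider "u = p!0" | "u = p!1" by blast
    then show ?thesis
    proof cases
      case 1 then show ?thesis using e12 n01 by metis
    next
      case 2
      show ?thesis
      proof (cases "length p = 3")
        case True
        moreover have "p \<noteq> []" using l3 by auto
        ultimately have "last p = p!2" "hd p = p!0"
          by (auto simp: last_conv_nth hd_conv_nth)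
        then show ?thesis using el 2 n01 by metis
      next
        case False
        then have "3 < length p" using l3 by simp
        then have "E (p!2) (p!3)" "p!3 \<noteq> p!1" using w d unfolding walk_def
          by (auto simp: numeral_eq_Suc nth_eq_iff_index_eq)
        then show ?thesis using 2 n01 by metis
      qed
    qed
  qed
qed

lemma lam_pow:
  assumes "0 < lam" "lam < (1::real)"
  shows "1 \<le> d \<Longrightarrow> lam ^ d \<le> lam" and "2 \<le> d \<Longrightarrow> lam ^ d \<le> lam ^ 2" and "lam ^ 2 < lam"
proof -
  show "1 \<le> d \<Longrightarrow> lam ^ d \<le> lam" using power_decreasing[of 1 d lam] assms by simp
  show "2 \<le> d \<Longrightarrow> lam ^ d \<le> lam ^ 2" using power_decreasing[of 2 d lam] assms by simp
  show "lam ^ 2 < lam" using assms by (simp add: power2_eq_square)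
qed


lemma star_simple:
  assumes fin: "finite V" and es: "\<And>x y. ES x y \<longleftrightarrow> (x \<in> V \<and> y \<in> V \<and> x \<noteq> y \<and> (x = u \<or> y = u))"
  shows "simple_graph V ES"
  unfolding simple_graph_def using fin es by auto

lemma star_connected:
  assumes u: "u \<in> V" and es: "\<And>x y. ES x y \<longleftrightarrow> (x \<in> V \<and> y \<in> V \<and> x \<noteq> y \<and> (x = u \<or> y = u))"
  shows "connected_graph V ES"
  unfolding connected_graph_def
proof (intro ballI)
  fix k l assume k: "k \<in> V" and l: "l \<in> V"
  show "\<exists>p. walk V ES p \<and> hd p = k \<and> last p = l"
  proof (cases "k = l")
    case True then show ?thesis using walk_single[OF k] by force
  next
    case False
    show ?thesis
    proof (cases "k = u \<or> l = u")
      case True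
      then have "walk V ES [k, l]" unfolding walk_def using k l False es by (auto simp: less_Suc_eq)
      then show ?thesis by force
    next
      case F2: False
      have "walk V ES [k, u, l]" unfolding walk_def using k l u F2 es
        by (auto simp: less_Suc_eq nth_Cons split: nat.splits)
      then show ?thesis by force
    qed
  qed
qed

lemma star_T1:
  assumes fin: "finite V" and es: "\<And>x y. ES x y \<longleftrightarrow> (x \<in> V \<and> y \<in> V \<and> x \<noteq> y \<and> (x = u \<or> y = u))"
    and k: "k \<in> V" and l: "l \<in> V" and kl: "k \<noteq> l" and ku: "k = u \<or> l = u"
    and lam: "0 \<le> lam"
  shows "lam \<le> Tf lam V ES u k l"
proof -
  have g: "simple_graph V ES" using star_simple[OF fin es] .
  have e: "ES k l" using es k l kl ku by auto
  have S: "shortest_paths V ES k l = {[k, l]}" using sp_adj[OF g e] .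
  have ns: "num_sp V ES k l = 1" unfolding num_sp_def S by simp
  have "[k, l] \<in> shortest_paths V ES k l" using S by simp
  then have "length [k, l] = Suc (gdist V ES k l)" unfolding shortest_paths_def by blast
  then have d: "gdist V ES k l = 1" by simp
  define w where "w = (if k = u then l else k)"
  have w: "w \<in> V" "ES u w" "{k, l} = {u, w}"
  proof -
    show "w \<in> V" using k l unfolding w_def by simp
    show "{k, l} = {u, w}" using ku unfolding w_def by auto
    show "ES u w" using ku e es[of u w] es[of k l] kl unfolding w_def by (cases "k = u") simp_all
  qed
  have "uses_edge [k, l] u w" unfolding uses_edge_def using w by auto
  then have "{p \<in> shortest_paths V ES k l. uses_edge p u w} = {[k, l]}" unfolding S by auto
  then have "num_sp_edge V ES k l u w = 1" unfolding num_sp_edge_def by simp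
  moreover have "num_sp_edge V ES k l u w \<le> (\<Sum>v\<in>{v \<in> V. ES u v}. num_sp_edge V ES k l u v)"
    by (rule member_le_sum) (use w fin in simp_all)
  ultimately have "1 \<le> (\<Sum>v\<in>{v \<in> V. ES u v}. num_sp_edge V ES k l u v)" by simp
  then have "(1::real) \<le> real (\<Sum>v\<in>{v \<in> V. ES u v}. num_sp_edge V ES k l u v)"
    by (metis of_nat_1 of_nat_le_iff)
  then have "1 * lam \<le> real (\<Sum>v\<in>{v \<in> V. ES u v}. num_sp_edge V ES k l u v) * lam"
    by (rule mult_right_mono[OF _ lam])
  moreover have "Tf lam V ES u k l = real (\<Sum>v\<in>{v \<in> V. ES u v}. num_sp_edge V ES k l u v) * lam"
    unfolding Tf_def ns d by simp
  ultimately show ?thesis by linarith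
qed

lemma star_T2:
  assumes fin: "finite V" and es: "\<And>x y. ES x y \<longleftrightarrow> (x \<in> V \<and> y \<in> V \<and> x \<noteq> y \<and> (x = u \<or> y = u))"
    and u: "u \<in> V" and k: "k \<in> V" and l: "l \<in> V" and kl: "k \<noteq> l" and ku: "k \<noteq> u" "l \<noteq> u"
    and lam: "0 \<le> lam"
  shows "2 * lam ^ 2 \<le> Tf lam V ES u k l"
proof -
  have g: "simple_graph V ES" using star_simple[OF fin es] .
  have w3: "walk V ES [k, u, l]" unfolding walk_def using k l u ku es
    by (auto simp: less_Suc_eq nth_Cons split: nat.splits)
  have "gdist V ES k l \<le> length [k, u, l] - 1" by (rule gdist_le[OF w3]) simp_all
  then have "gdist V ES k l \<le> 2" by simp
  moreover have "2 \<le> gdist V ES k l" using gdist_ge2(2)[OF w3 _ _ kl] es ku by auto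
  ultimately have d: "gdist V ES k l = 2" by simp
  have S: "shortest_paths V ES k l = {[k, u, l]}"
  proof
    show "{[k, u, l]} \<subseteq> shortest_paths V ES k l" unfolding shortest_paths_def using w3 d by simp
    show "shortest_paths V ES k l \<subseteq> {[k, u, l]}"
    proof
      fix p assume "p \<in> shortest_paths V ES k l"
      then have p: "walk V ES p" "hd p = k" "last p = l" "length p = 3"
        unfolding shortest_paths_def using d by auto
      then obtain a b c where abc: "p = [a, b, c]"
        by (metis length_0_conv length_Suc_conv numeral_3_eq_3)
      then have "ES a b" using p(1) unfolding walk_def by auto
      then have "b = u" using abc p ku es by auto
      then show "p \<in> {[k, u, l]}" using abc p by simp
    qed
  qed
  have ns: "num_sp V ES k l = 1" unfolding num_sp_def S by simp
  have "uses_edge [k, u, l] u k" unfolding uses_edge_def by (rule exI[of _ 0]) auto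
  then have "{p \<in> shortest_paths V ES k l. uses_edge p u k} = {[k, u, l]}" unfolding S by auto
  then have 1: "num_sp_edge V ES k l u k = 1" unfolding num_sp_edge_def by simp
  have "uses_edge [k, u, l] u l" unfolding uses_edge_def by (rule exI[of _ 1]) auto
  then have "{p \<in> shortest_paths V ES k l. uses_edge p u l} = {[k, u, l]}" unfolding S by auto
  then have 2: "num_sp_edge V ES k l u l = 1" unfolding num_sp_edge_def by simp
  have "(\<Sum>v\<in>{k, l}. num_sp_edge V ES k l u v) \<le> (\<Sum>v\<in>{v \<in> V. ES u v}. num_sp_edge V ES k l u v)"
    by (rule sum_mono2) (use fin k l ku kl es u in auto)
  moreover have "(\<Sum>v\<in>{k, l}. num_sp_edge V ES k l u v) = 2" using 1 2 kl by simp
  ultimately have "2 \<le> (\<Sum>v\<in>{v \<in> V. ES u v}. num_sp_edge V ES k l u v)" by linarith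
  then have "(2::real) \<le> real (\<Sum>v\<in>{v \<in> V. ES u v}. num_sp_edge V ES k l u v)"
    by (metis of_nat_numeral of_nat_le_iff)
  then have "2 * lam ^ 2 \<le> real (\<Sum>v\<in>{v \<in> V. ES u v}. num_sp_edge V ES k l u v) * lam ^ 2"
    by (rule mult_right_mono) (use lam in simp)
  moreover have "Tf lam V ES u k l = real (\<Sum>v\<in>{v \<in> V. ES u v}. num_sp_edge V ES k l u v) * lam ^ 2"
    unfolding Tf_def ns d by simp
  ultimately show ?thesis by linarith
qed


lemma G_T:
  assumes g: "simple_graph V E" and c: "connected_graph V E" and lam0: "0 < lam" and lam1: "lam < 1"
    and k: "k \<in> V" and l: "l \<in> V" and kl: "k \<noteq> l"
  shows "k = u \<or> l = u \<Longrightarrow> Tf lam V E u k l \<le> lam"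
    and "k = u \<or> l = u \<Longrightarrow> \<not> E k l \<Longrightarrow> Tf lam V E u k l \<le> lam ^ 2"
    and "k \<noteq> u \<Longrightarrow> l \<noteq> u \<Longrightarrow> E k l \<Longrightarrow> Tf lam V E u k l \<le> 0"
    and "k \<noteq> u \<Longrightarrow> l \<noteq> u \<Longrightarrow> \<not> E k l \<Longrightarrow> Tf lam V E u k l \<le> 2 * lam ^ 2"
proof -
  have fin: "finite V" using g unfolding simple_graph_def by simp
  obtain p0 where p0: "walk V E p0" "hd p0 = k" "last p0 = l" using c k l unfolding connected_graph_def by blast
  have d1: "1 \<le> gdist V E k l" using gdist_ge2(1)[OF p0 kl] .
  have d2: "\<not> E k l \<Longrightarrow> 2 \<le> gdist V E k l" using gdist_ge2(2)[OF p0 kl] .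
  have lam: "0 \<le> lam" using lam0 by simp
  have sp: "distinct p \<and> p \<noteq> [] \<and> hd p = k \<and> last p = l" if "p \<in> shortest_paths V E k l" for p
    using that sp_distinct[OF that] unfolding shortest_paths_def walk_def by auto
  {
    assume ku: "k = u \<or> l = u"
    have "Tf lam V E u k l \<le> lam ^ gdist V E k l * real (1::nat)"
    proof (rule T_bound[OF fin lam])
      fix p assume "p \<in> shortest_paths V E k l"
      then have a: "distinct p" "p \<noteq> []" "u = hd p \<or> u = last p" using sp ku by auto
      show "card {v \<in> V. E u v \<and> uses_edge p u v} \<le> 1" by (rule path_count_end[OF a(1) fin a(2) a(3)])
    qed
    then have T: "Tf lam V E u k l \<le> lam ^ gdist V E k l" by simp
    show "Tf lam V E u k l \<le> lam" using T lam_pow(1)[OF lam0 lam1 d1] by linarith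
    show "\<not> E k l \<Longrightarrow> Tf lam V E u k l \<le> lam ^ 2" using T lam_pow(2)[OF lam0 lam1 d2] by linarith
  }
  {
    assume ku: "k \<noteq> u" "l \<noteq> u"
    {
      assume e: "E k l"
      have "Tf lam V E u k l \<le> lam ^ gdist V E k l * real (0::nat)"
      proof (rule T_bound[OF fin lam])
        fix p assume "p \<in> shortest_paths V E k l"
        then have "p = [k, l]" using sp_adj[OF g e] by simp
        then have "u \<notin> set p" using ku by simp
        then show "card {v \<in> V. E u v \<and> uses_edge p u v} \<le> 0" using path_count_0[of u p V E] by simp
      qed
      then show "Tf lam V E u k l \<le> 0" by simp
    }
    {
      assume e: "\<not> E k l"
      have "Tf lam V E u k l \<le> lam ^ gdist V E k l * real (2::nat)"
      proof (rule T_bound[OF fin lam])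
        fix p assume "p \<in> shortest_paths V E k l"
        then have a: "distinct p" using sp by auto
        show "card {v \<in> V. E u v \<and> uses_edge p u v} \<le> 2" by (rule path_count_le2[OF a fin])
      qed
      then show "Tf lam V E u k l \<le> 2 * lam ^ 2" using lam_pow(2)[OF lam0 lam1 d2[OF e]] by simp
    }
  }
qed


theorem lemma2:
  fixes lam :: real and n :: nat and V :: "'a set" and E :: "'a \<Rightarrow> 'a \<Rightarrow> bool"
  assumes "0 < lam" and "lam < 1" and "0 < n"
    and "simple_graph V E" and "connected_graph V E" and "card V = n"
    and "\<forall>(V' :: 'a set) E'. simple_graph V' E' \<and> connected_graph V' E' \<and> card V' = n
           \<longrightarrow> max_exp_betweenness lam V' E' \<le> max_exp_betweenness lam V E"
  shows "is_tree V E"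
proof (rule ccontr)
  assume nt: "\<not> is_tree V E"
  then obtain cyc where cyc: "is_cycle V E cyc" using assms(5) unfolding is_tree_def by blast
  have fin: "finite V" using assms(4) unfolding simple_graph_def by simp
  have Vne: "V \<noteq> {}" using cyc unfolding is_cycle_def walk_def by auto
  let ?c = "exp_betweenness_centrality lam V E"
  have "Max (?c ` V) \<in> ?c ` V" by (rule Max_in) (use fin Vne in auto)
  then obtain u where u: "u \<in> V" "max_exp_betweenness lam V E = ?c u"
    unfolding max_exp_betweenness_def by auto
  define ES where "ES = (\<lambda>x y. x \<in> V \<and> y \<in> V \<and> x \<noteq> y \<and> (x = u \<or> y = u))"
  have es: "\<And>x y. ES x y \<longleftrightarrow> (x \<in> V \<and> y \<in> V \<and> x \<noteq> y \<and> (x = u \<or> y = u))" unfolding ES_def by simp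
  have gS: "simple_graph V ES" by (rule star_simple[OF fin es])
  have cS: "connected_graph V ES" by (rule star_connected[OF u(1) es])
  have le: "max_exp_betweenness lam V ES \<le> max_exp_betweenness lam V E"
    using assms(7) gS cS assms(6) by blast
  have ge: "exp_betweenness_centrality lam V ES u \<le> max_exp_betweenness lam V ES"
    unfolding max_exp_betweenness_def by (rule Max_ge) (use fin u in auto)
  have lam: "0 \<le> lam" using assms(1) by simp
  have l2: "0 \<le> lam ^ 2" by simp
  have l2p: "0 < lam ^ 2" using assms(1) by simp
  have lt: "?c u < exp_betweenness_centrality lam V ES u"
  proof -
    let ?P = "{(k,l). k \<in> V \<and> l \<in> V \<and> k \<noteq> l}"
    have finP: "finite ?P" by (rule finite_subset[of _ "V \<times> V"]) (use fin in auto)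
    have "(\<Sum>(k,l)\<in>?P. Tf lam V E u k l) < (\<Sum>(k,l)\<in>?P. Tf lam V ES u k l)"
    proof (rule sum_strict_mono_ex1[OF finP])
      show "\<forall>x\<in>?P. (case x of (k,l) \<Rightarrow> Tf lam V E u k l) \<le> (case x of (k,l) \<Rightarrow> Tf lam V ES u k l)"
      proof (clarify)
        fix k l assume k: "k \<in> V" and l: "l \<in> V" and kl: "k \<noteq> l"
        show "Tf lam V E u k l \<le> Tf lam V ES u k l"
        proof (cases "k = u \<or> l = u")
          case True
          then show ?thesis using G_T(1)[OF assms(4,5,1,2) k l kl True] star_T1[OF fin es k l kl True lam]
            by linarith
        next
          case False
          then have ku: "k \<noteq> u" "l \<noteq> u" by auto
          have s: "2 * lam ^ 2 \<le> Tf lam V ES u k l" by (rule star_T2[OF fin es u(1) k l kl ku lam])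
          show ?thesis
          proof (cases "E k l")
            case True
            then show ?thesis using G_T(3)[OF assms(4,5,1,2) k l kl ku True] s l2 by linarith
          next
            case False
            then show ?thesis using G_T(4)[OF assms(4,5,1,2) k l kl ku False] s by linarith
          qed
        qed
      qed
      show "\<exists>x\<in>?P. (case x of (k,l) \<Rightarrow> Tf lam V E u k l) < (case x of (k,l) \<Rightarrow> Tf lam V ES u k l)"
      proof (cases "\<exists>l\<in>V. l \<noteq> u \<and> \<not> E u l")
        case True
        then obtain l where l: "l \<in> V" "l \<noteq> u" "\<not> E u l" by blast
        have ul: "u \<noteq> l" using l by simp
        have uu: "u = u \<or> l = u" by simp
        have "Tf lam V E u u l < Tf lam V ES u u l"
          using G_T(2)[OF assms(4,5,1,2) u(1) l(1) ul uu l(3)] star_T1[OF fin es u(1) l(1) ul uu lam]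
            lam_pow(3)[OF assms(1,2)] by linarith
        then show ?thesis using u(1) l by force
      next
        case False
        obtain a b where ab: "E a b" "a \<noteq> u" "b \<noteq> u" using cycle_edge_avoid[OF cyc] by blast
        have a: "a \<in> V" and b: "b \<in> V" and abn: "a \<noteq> b"
          using ab(1) assms(4) unfolding simple_graph_def by auto
        have "Tf lam V E u a b < Tf lam V ES u a b"
          using G_T(3)[OF assms(4,5,1,2) a b abn ab(2,3) ab(1)] star_T2[OF fin es u(1) a b abn ab(2,3) lam]
            l2p by linarith
        then show ?thesis using a b abn by force
      qed
    qed
    then show ?thesis using cent_formula[of lam V E u] cent_formula[of lam V ES u] by simp
  qed
  show False using le ge lt u(2) by linarith
qed

end
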